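(* Let $L\subseteq\mathbb{Z}^n$ be a lattice, let $L_{\mathbb{R}}$ carry an $L$-equivariant cell complex structure, and let $\psi\colon L_{\mathbb{R}}\to\mathbb{Z}^n$ be a compatible $\mathbb{Z}^n$-stratification. The cellular free $S$-complex $F_\psi$ is minimal if and only if, for every $\bm u\in\mathbb{Z}^n$, each connected component of the preimage $\psi^{-1}(\bm u)$ consists of a single open cell.
   Context: Let $n\ge1$, $L\subseteq\mathbb{Z}^n$ a subgroup, $L_{\mathbb{R}}=L\otimes\mathbb{R}\subseteq\mathbb{R}^n$. A cell complex (CW) structure on $L_{\mathbb{R}}$ is $L$-equivariant if translates of open cells by $\bm v\in L$ are open cells. Give $\mathbb{Z}^n$ the componentwise order and Alexandrov topology (open = up-closed). A compatible $\mathbb{Z}^n$-stratification is a continuous $\psi\colon L_{\mathbb{R}}\to\mathbb{Z}^n$, constant on open cells, with $\psi(\bm p+\bm v)=\psi(\bm p)+\bm v$ for $\bm v\in L$; $\psi(\sigma)$ is its value on the cell $\sigma$. $\Bbbk$ is a field, $S=\Bbbk[x_1,\dots,x_n]$ with $\deg\bm x^{\bm u}=\bm u$. With $L$-invariant orientations and cellular incidence numbers $\varepsilon(\sigma,\tau)$ (zero unless $\dim\sigma=\dim\tau+1$ and $\tau\subseteq\overline\sigma$), $F_\psi$ is the complex with $(F_\psi)_i=\bigoplus_{\dim\sigma=i}S\,\sigma$, $S\,\sigma\cong S(-\psi(\sigma))$, and $\partial\sigma=\sum_\tau\varepsilon(\sigma,\tau)\bm x^{\psi(\sigma)-\psi(\tau)}\tau$.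 A free complex is minimal if no entry of its differential matrices is a nonzero scalar (unit). *)

theory Defs
  imports "HOL-Analysis.Analysis" "HOL-Library.Poly_Mapping"
begin

text \<open>Points of Z^n are vectors int^'n, points of R^n are vectors real^'n
  (the dimension n = CARD('n) is arbitrary, n >= 1 automatically).\<close>

definition zle :: "int^'n \<Rightarrow> int^'n \<Rightarrow> bool" where
  "zle u v \<longleftrightarrow> (\<forall>i. u$i \<le> v$i)"

definition rvec :: "int^'n \<Rightarrow> real^'n" where
  "rvec v = (\<chi> i. real_of_int (v$i))"

definition is_subgroup_Zn :: "(int^'n) set \<Rightarrow> bool" where
  "is_subgroup_Zn L \<longleftrightarrow> 0 \<in> L \<and> (\<forall>u\<in>L. \<forall>v\<in>L. u + v \<in> L \<and> - u \<in> L)"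

definition LR :: "(int^'n) set \<Rightarrow> (real^'n) set" where
  "LR L = span (rvec ` L)"

text \<open>Each closed cell is the homeomorphic image of a closed
  d-ball (taken inside a d-dimensional linear subspace of real^'n), the open cell
  being the image of the open ball; cells are nonempty, pairwise disjoint and cover X;
  closure-finiteness (C) and the weak topology (W) hold.\<close>

definition cell_of_dim :: "(real^'n) set \<Rightarrow> nat \<Rightarrow> bool" where
  "cell_of_dim \<sigma> d \<longleftrightarrow>
     (\<exists>V::(real^'n) set. \<exists>h. subspace V \<and> dim V = d \<and>
        homeomorphism (cball 0 1 \<inter> V) (closure \<sigma>) h (inv_into (cball 0 1 \<inter> V) h) \<and>
        h ` (ball 0 1 \<inter> V) = \<sigma>)"

definition cell_complex :: "(real^'n) set \<Rightarrow> (real^'n) set set \<Rightarrow> ((real^'n) set \<Rightarrow> nat) \<Rightarrow> bool" where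
  "cell_complex X C cdim \<longleftrightarrow>
     (\<forall>\<sigma>\<in>C. \<sigma> \<noteq> {} \<and> cell_of_dim \<sigma> (cdim \<sigma>)) \<and>
     (\<forall>\<sigma>\<in>C. \<forall>\<tau>\<in>C. \<sigma> \<noteq> \<tau> \<longrightarrow> \<sigma> \<inter> \<tau> = {}) \<and>
     \<Union>C = X \<and>
     (\<forall>\<sigma>\<in>C. closure \<sigma> - \<sigma> \<subseteq> \<Union>{\<tau>\<in>C. cdim \<tau> < cdim \<sigma>}) \<and>
     (\<forall>\<sigma>\<in>C. finite {\<tau>\<in>C. \<tau> \<inter> closure \<sigma> \<noteq> {}}) \<and>
     (\<forall>A. A \<subseteq> X \<longrightarrow>
        (closedin (top_of_set X) A \<longleftrightarrow> (\<forall>\<sigma>\<in>C. closedin (top_of_set (closure \<sigma>)) (A \<inter> closure \<sigma>))))"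

definition equivariant_cc :: "(int^'n) set \<Rightarrow> (real^'n) set set \<Rightarrow> ((real^'n) set \<Rightarrow> nat) \<Rightarrow> bool" where
  "equivariant_cc L C cdim \<longleftrightarrow>
     (\<forall>\<sigma>\<in>C. \<forall>v\<in>L. (\<lambda>p. p + rvec v) ` \<sigma> \<in> C \<and> cdim ((\<lambda>p. p + rvec v) ` \<sigma>) = cdim \<sigma>)"

definition facet :: "((real^'n) set \<Rightarrow> nat) \<Rightarrow> (real^'n) set \<Rightarrow> (real^'n) set \<Rightarrow> bool" where
  "facet cdim \<sigma> \<tau> \<longleftrightarrow> \<tau> \<subseteq> closure \<sigma> \<and> cdim \<sigma> = cdim \<tau> + 1"

definition incidence_function ::
  "(int^'n) set \<Rightarrow> (real^'n) set set \<Rightarrow> ((real^'n) set \<Rightarrow> nat) \<Rightarrow>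
   ((real^'n) set \<Rightarrow> (real^'n) set \<Rightarrow> int) \<Rightarrow> bool" where
  "incidence_function L C cdim \<epsilon> \<longleftrightarrow>
     (\<forall>\<sigma>\<in>C. \<forall>\<tau>\<in>C. (facet cdim \<sigma> \<tau> \<longrightarrow> \<epsilon> \<sigma> \<tau> \<in> {1, -1}) \<and>
                    (\<not> facet cdim \<sigma> \<tau> \<longrightarrow> \<epsilon> \<sigma> \<tau> = 0)) \<and>
     (\<forall>\<sigma>\<in>C. \<forall>\<rho>\<in>C. (\<Sum>\<tau>\<in>{\<tau>\<in>C. \<epsilon> \<sigma> \<tau> \<noteq> 0}. \<epsilon> \<sigma> \<tau> * \<epsilon> \<tau> \<rho>) = 0) \<and>
     (\<forall>e\<in>C. cdim e = 1 \<longrightarrow> (\<Sum>v\<in>{v\<in>C. \<epsilon> e v \<noteq> 0}. \<epsilon> e v) = 0) \<and>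
     (\<forall>\<sigma>\<in>C. \<forall>\<tau>\<in>C. \<forall>v\<in>L.
        \<epsilon> ((\<lambda>p. p + rvec v) ` \<sigma>) ((\<lambda>p. p + rvec v) ` \<tau>) = \<epsilon> \<sigma> \<tau>)"

text \<open>Continuity for the Alexandrov topology on Z^n (open = up-closed).\<close>

definition up_closed :: "(int^'n) set \<Rightarrow> bool" where
  "up_closed U \<longleftrightarrow> (\<forall>u\<in>U. \<forall>v. zle u v \<longrightarrow> v \<in> U)"

definition stratification ::
  "(int^'n) set \<Rightarrow> (real^'n) set set \<Rightarrow> (real^'n \<Rightarrow> int^'n) \<Rightarrow> bool" where
  "stratification L C \<psi> \<longleftrightarrow>
     (\<forall>U. up_closed U \<longrightarrow> openin (top_of_set (LR L)) {p \<in> LR L. \<psi> p \<in> U}) \<and>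
     (\<forall>\<sigma>\<in>C. \<forall>p\<in>\<sigma>. \<forall>q\<in>\<sigma>. \<psi> p = \<psi> q) \<and>
     (\<forall>p\<in>LR L. \<forall>v\<in>L. \<psi> (p + rvec v) = \<psi> p + v)"

definition cval :: "(real^'n \<Rightarrow> int^'n) \<Rightarrow> (real^'n) set \<Rightarrow> int^'n" where
  "cval \<psi> \<sigma> = \<psi> (SOME p. p \<in> \<sigma>)"

text \<open>S = k[x_1..x_n] is represented as finitely supported maps from exponent
  vectors ('n => nat) to k; x^e is single e 1.\<close>

definition monexp :: "int^'n \<Rightarrow> (nat^'n)" where
  "monexp v = (\<chi> i. nat (v$i))"

definition Fpsi_entry ::
  "(real^'n \<Rightarrow> int^'n) \<Rightarrow> ((real^'n) set \<Rightarrow> (real^'n) set \<Rightarrow> int) \<Rightarrow>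
   (real^'n) set \<Rightarrow> (real^'n) set \<Rightarrow> (nat^'n) \<Rightarrow>\<^sub>0 'k::field" where
  "Fpsi_entry \<psi> \<epsilon> \<sigma> \<tau> = Poly_Mapping.single (monexp (cval \<psi> \<sigma> - cval \<psi> \<tau>)) (of_int (\<epsilon> \<sigma> \<tau>))"

definition nonzero_scalar :: "((nat^'n) \<Rightarrow>\<^sub>0 'k::field) \<Rightarrow> bool" where
  "nonzero_scalar f \<longleftrightarrow> (\<exists>c. c \<noteq> 0 \<and> f = Poly_Mapping.single 0 c)"

definition Fpsi_minimal ::
  "'k::field itself \<Rightarrow> (real^'n) set set \<Rightarrow> ((real^'n) set \<Rightarrow> nat) \<Rightarrow>
   (real^'n \<Rightarrow> int^'n) \<Rightarrow> ((real^'n) set \<Rightarrow> (real^'n) set \<Rightarrow> int) \<Rightarrow> bool" where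
  "Fpsi_minimal TYPE('k) C cdim \<psi> \<epsilon> \<longleftrightarrow>
     (\<forall>\<sigma>\<in>C. \<forall>\<tau>\<in>C. cdim \<sigma> = cdim \<tau> + 1 \<longrightarrow>
        \<not> nonzero_scalar (Fpsi_entry \<psi> \<epsilon> \<sigma> \<tau> :: (nat^'n) \<Rightarrow>\<^sub>0 'k))"

end

theory Submission
  imports Defs
begin

lemma cell_of_dimE:
  fixes \<sigma> :: "(real^'n) set"
  assumes "cell_of_dim \<sigma> d"
  obtains V :: "(real^'n) set" and h g where "subspace V" "dim V = d"
    "homeomorphism (cball 0 1 \<inter> V) (closure \<sigma>) h g" "h ` (ball 0 1 \<inter> V) = \<sigma>"
  using assms unfolding cell_of_dim_def by blast

lemma cell_connected:
  fixes \<sigma> :: "(real^'n) set"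
  assumes "cell_of_dim \<sigma> d" shows "connected \<sigma>"
proof -
  obtain V :: "(real^'n) set" and h g where V: "subspace V" and hom: "homeomorphism (cball 0 1 \<inter> V) (closure \<sigma>) h g"
    and im: "h ` (ball 0 1 \<inter> V) = \<sigma>" using assms by (rule cell_of_dimE)
  have "continuous_on (ball 0 1 \<inter> V) h"
    using hom unfolding homeomorphism_def
    by (meson Int_mono ball_subset_cball continuous_on_subset order_refl)
  moreover have "connected (ball 0 1 \<inter> V)"
    using V by (intro convex_connected convex_Int convex_ball subspace_imp_convex)
  ultimately show ?thesis using im connected_continuous_image by blast
qed

lemma cell_boundary:
  fixes V :: "(real^'n) set" and \<sigma> :: "(real^'n) set"
  assumes V: "subspace V" and hom: "homeomorphism (cball 0 1 \<inter> V) (closure \<sigma>) h g"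
    and im: "h ` (ball 0 1 \<inter> V) = \<sigma>"
  shows "closure \<sigma> - \<sigma> = h ` (sphere 0 1 \<inter> V)"
proof -
  have inj: "inj_on h (cball 0 1 \<inter> V)" using hom unfolding homeomorphism_def
    by (metis inj_on_inverseI)
  have img: "h ` (cball 0 1 \<inter> V) = closure \<sigma>" using hom unfolding homeomorphism_def by blast
  have "h ` (cball 0 1 \<inter> V - ball 0 1 \<inter> V) = h ` (cball 0 1 \<inter> V) - h ` (ball 0 1 \<inter> V)"
    by (rule inj_on_image_set_diff[OF inj]) auto
  moreover have "cball 0 1 \<inter> V - ball 0 1 \<inter> V = sphere (0::real^'n) 1 \<inter> V" by auto
  ultimately show ?thesis using img im by simp
qed

lemma top_local:
  fixes \<rho> \<sigma> V V' :: "(real^'n) set"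
  assumes V: "subspace V" "dim V = d" and homh: "homeomorphism (cball 0 1 \<inter> V) (closure \<rho>) h h'"
    and imh: "h ` (ball 0 1 \<inter> V) = \<rho>"
    and V': "subspace V'" "dim V' = k" and homg: "homeomorphism (cball 0 1 \<inter> V') (closure \<sigma>) g g'"
    and img: "g ` (ball 0 1 \<inter> V') = \<sigma>"
    and kd: "k < d" and U: "open U" "q \<in> U" and qB: "q \<in> closure \<rho> - \<rho>"
    and UB: "U \<inter> (closure \<rho> - \<rho>) \<subseteq> \<sigma>"
  shows "k + 1 = d \<and> (\<exists>Ob. open Ob \<and> q \<in> Ob \<and> Ob \<inter> \<sigma> \<subseteq> closure \<rho>)"
proof -
  have B: "closure \<rho> - \<rho> = h ` (sphere 0 1 \<inter> V)" by (rule cell_boundary[OF V(1) homh imh])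
  define Ub where "Ub = cball (0::real^'n) 1 \<inter> V"
  have affV: "affine V" using V(1) by (simp add: subspace_imp_affine)
  have affV': "affine V'" using V'(1) by (simp add: subspace_imp_affine)
  have "0 \<in> interior (cball (0::real^'n) 1) \<inter> V" using V(1) by (simp add: subspace_0)
  then have "rel_frontier (cball 0 1 \<inter> V) = frontier (cball (0::real^'n) 1) \<inter> V"
    by (intro convex_affine_rel_frontier_Int convex_cball affV) blast
  then have rf: "rel_frontier Ub = sphere 0 1 \<inter> V"
    unfolding Ub_def by simp
  have cvx: "convex Ub" unfolding Ub_def using V(1) by (intro convex_Int convex_cball subspace_imp_convex)
  have bdd: "bounded Ub" unfolding Ub_def by (simp add: bounded_Int)
  have affUb: "aff_dim Ub = int d"
  proof -
    have "openin (top_of_set V) (V \<inter> ball 0 1)" by (rule openin_open_Int) simp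
    moreover have "V \<inter> ball 0 1 \<noteq> {}" using V(1) by (auto intro: subspace_0)
    ultimately have "aff_dim (V \<inter> ball 0 1) = aff_dim V" using aff_dim_openin affV by blast
    moreover have "aff_dim (V \<inter> ball 0 1) \<le> aff_dim Ub" unfolding Ub_def
      by (rule aff_dim_subset) auto
    moreover have "aff_dim Ub \<le> aff_dim V" unfolding Ub_def by (rule aff_dim_subset) auto
    ultimately show ?thesis using aff_dim_subspace[OF V(1)] V(2) by simp
  qed
  define S where "S = (sphere 0 1 \<inter> V) \<inter> h -` U"
  have conth: "continuous_on (cball 0 1 \<inter> V) h" using homh by (simp add: homeomorphism_def)
  have conth': "continuous_on (sphere 0 1 \<inter> V) h"
    by (rule continuous_on_subset[OF conth]) auto
  have S_open: "openin (top_of_set (sphere 0 1 \<inter> V)) S"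
    unfolding S_def by (rule continuous_openin_preimage_gen[OF conth' U(1)])
  have hS: "h ` S = U \<inter> (closure \<rho> - \<rho>)" using B by (auto simp: S_def)
  have h'h: "\<And>x. x \<in> cball 0 1 \<inter> V \<Longrightarrow> h' (h x) = x" using homh by (simp add: homeomorphism_def)
  have gg': "\<And>y. y \<in> closure \<sigma> \<Longrightarrow> g (g' y) = y" using homg by (simp add: homeomorphism_def)
  have g'g: "\<And>x. x \<in> cball 0 1 \<inter> V' \<Longrightarrow> g' (g x) = x" using homg by (simp add: homeomorphism_def)
  have contg': "continuous_on (closure \<sigma>) g'" using homg by (simp add: homeomorphism_def)
  define f where "f = g' \<circ> h"
  have hSsig: "h ` S \<subseteq> \<sigma>" using hS UB by auto
  have contf: "continuous_on S f" unfolding f_def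
  proof (rule continuous_on_compose)
    show "continuous_on S h" by (rule continuous_on_subset[OF conth']) (auto simp: S_def)
    show "continuous_on (h ` S) g'" by (rule continuous_on_subset[OF contg'])
        (use hSsig closure_subset in blast)
  qed
  have fS: "f ` S \<subseteq> ball 0 1 \<inter> V'"
  proof
    fix y assume "y \<in> f ` S"
    then obtain x where x: "x \<in> S" "y = g' (h x)" by (auto simp: f_def)
    then have "h x \<in> g ` (ball 0 1 \<inter> V')" using hSsig img by auto
    then obtain z where z: "z \<in> ball 0 1 \<inter> V'" "h x = g z" by auto
    then show "y \<in> ball 0 1 \<inter> V'" using x g'g[of z] by auto
  qed
  have injf: "inj_on f S"
  proof (rule inj_onI)
    fix x y assume xy: "x \<in> S" "y \<in> S" "f x = f y"
    then have "g (g' (h x)) = g (g' (h y))" by (simp add: f_def)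
    moreover have "h x \<in> closure \<sigma>" "h y \<in> closure \<sigma>" using xy(1,2) hSsig closure_subset by blast+
    ultimately have "h x = h y" using gg' by metis
    moreover have "x \<in> cball 0 1 \<inter> V" "y \<in> cball 0 1 \<inter> V" using xy(1,2) unfolding S_def by auto
    ultimately show "x = y" using h'h by metis
  qed
  have gf: "g ` (f ` S) = h ` S"
  proof -
    have "g ` (f ` S) = (\<lambda>x. g (g' (h x))) ` S" by (auto simp: f_def image_image)
    also have "\<dots> = h ` S" using gg' hSsig closure_subset by (intro image_cong) blast+
    finally show ?thesis .
  qed
  obtain s where s: "s \<in> sphere 0 1 \<inter> V" "q = h s" using qB B by auto
  have sS: "s \<in> S" using s U(2) by (simp add: S_def)
  have part1: "\<exists>Ob. open Ob \<and> q \<in> Ob \<and> Ob \<inter> \<sigma> \<subseteq> closure \<rho>"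
  proof -
    have "openin (top_of_set V') (f ` S)"
    proof (rule invariance_of_domain_sphere_affine_set_gen[OF contf injf _ bdd cvx affV'])
      show "f \<in> S \<rightarrow> V'" using fS by auto
      show "aff_dim V' < aff_dim Ub" using affUb aff_dim_subspace[OF V'(1)] V'(2) kd by simp
      show "openin (top_of_set (rel_frontier Ub)) S" using S_open rf by simp
    qed
    then have o1: "openin (top_of_set (ball 0 1 \<inter> V')) (f ` S)"
      by (rule openin_subset_trans) (use fS in auto)
    have "homeomorphism (ball 0 1 \<inter> V') \<sigma> g g'"
      by (rule homeomorphism_of_subsets[OF homg _ _ img]) (auto intro: closure_subset)
    then have "openin (top_of_set \<sigma>) (g ` (f ` S))" using o1 by (rule homeomorphism_imp_open_map)
    then have "openin (top_of_set \<sigma>) (U \<inter> (closure \<rho> - \<rho>))" using gf hS by simp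
    then obtain Ob where Ob: "open Ob" "U \<inter> (closure \<rho> - \<rho>) = \<sigma> \<inter> Ob" by (auto simp: openin_open)
    have "q \<in> Ob" using Ob(2) U(2) qB by blast
    moreover have "Ob \<inter> \<sigma> \<subseteq> closure \<rho>" using Ob(2) by blast
    ultimately show ?thesis using Ob(1) by blast
  qed
  have part2: "d \<le> k + 1"
  proof -
    have "d \<noteq> 0"
    proof
      assume "d = 0"
      then have "V \<subseteq> {0}" using V(2) by simp
      then show False using s(1) by auto
    qed
    define a where "a = - s"
    have aS: "a \<in> rel_frontier Ub" using s(1) V(1) rf by (auto simp: a_def subspace_neg)
    have as: "a \<noteq> s"
    proof
      assume "a = s"
      then have "s + s = 0" unfolding a_def by (metis add.right_inverse)
      then have "(2::real) *\<^sub>R s = 0" by (simp add: scaleR_2)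
      then have "s = 0" by simp
      then show False using s(1) by simp
    qed
    have "d - 1 \<le> dim (UNIV :: (real^'n) set)"
      using V(2) dim_subset_UNIV_cart[of V] by simp
    then obtain T0 :: "(real^'n) set" where T0: "subspace T0" "dim T0 = d - 1"
      using choose_subspace_of_subspace[of "d - 1" "UNIV :: (real^'n) set"] by blast
    have affT0: "affine T0" using T0(1) by (simp add: subspace_imp_affine)
    have "aff_dim Ub = aff_dim T0 + 1" using affUb aff_dim_subspace[OF T0(1)] T0(2) \<open>d \<noteq> 0\<close> by simp
    then have "rel_frontier Ub - {a} homeomorphic T0"
      by (rule homeomorphic_punctured_sphere_affine_gen[OF cvx bdd aS affT0])
    then obtain \<phi> \<phi>' where hphi: "homeomorphism (rel_frontier Ub - {a}) T0 \<phi> \<phi>'"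
      by (auto simp: homeomorphic_def)
    define S1 where "S1 = S - {a}"
    obtain Ob1 where Ob1: "open Ob1" "S = (sphere 0 1 \<inter> V) \<inter> Ob1" using S_open by (auto simp: openin_open)
    have S1o: "openin (top_of_set (rel_frontier Ub - {a})) S1"
      unfolding openin_open S1_def using Ob1 rf by (intro exI[of _ Ob1]) auto
    define W where "W = \<phi> ` S1"
    have Wo: "openin (top_of_set T0) W" unfolding W_def by (rule homeomorphism_imp_open_map[OF hphi S1o])
    have sS1: "s \<in> S1" using sS as by (simp add: S1_def)
    then have Wne: "W \<noteq> {}" by (auto simp: W_def)
    have S1sub: "S1 \<subseteq> rel_frontier Ub - {a}" using openin_imp_subset[OF S1o] .
    have phi'phi: "\<And>x. x \<in> rel_frontier Ub - {a} \<Longrightarrow> \<phi>' (\<phi> x) = x" using hphi by (simp add: homeomorphism_def)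
    have phi'W: "\<phi>' ` W = S1"
    proof -
      have "\<phi>' ` W = (\<lambda>x. \<phi>' (\<phi> x)) ` S1" by (simp add: W_def image_image)
      also have "\<dots> = (\<lambda>x. x) ` S1" by (rule image_cong) (use S1sub phi'phi in auto)
      finally show ?thesis by simp
    qed
    have WT0: "W \<subseteq> T0" using openin_imp_subset[OF Wo] .
    have contphi': "continuous_on T0 \<phi>'" using hphi by (simp add: homeomorphism_def)
    have "aff_dim T0 \<le> aff_dim V'"
    proof (rule invariance_of_dimension_affine_sets[OF Wo affT0 affV' _ _ _ Wne])
      show "continuous_on W (f \<circ> \<phi>')"
      proof (rule continuous_on_compose)
        show "continuous_on W \<phi>'" by (rule continuous_on_subset[OF contphi' WT0])
        show "continuous_on (\<phi>' ` W) f" using phi'W by (auto intro: continuous_on_subset[OF contf] simp: S1_def)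
      qed
      show "f \<circ> \<phi>' \<in> W \<rightarrow> V'"
      proof
        fix x assume "x \<in> W"
        then have "\<phi>' x \<in> S" using phi'W by (auto simp: S1_def)
        then show "(f \<circ> \<phi>') x \<in> V'" using fS by auto
      qed
      show "inj_on (f \<circ> \<phi>') W"
      proof (rule comp_inj_on)
        show "inj_on \<phi>' W" using hphi WT0 by (metis homeomorphism_def inj_on_inverseI subsetD)
        show "inj_on f (\<phi>' ` W)" using phi'W injf by (auto simp: S1_def intro: inj_on_subset)
      qed
    qed
    then show ?thesis using aff_dim_subspace[OF T0(1)] aff_dim_subspace[OF V'(1)] T0(2) V'(2) by simp
  qed
  show ?thesis using part1 part2 kd by simp
qed

lemma cc_cell0: assumes "cell_complex X C cdim" shows "\<forall>\<sigma>\<in>C. \<sigma> \<noteq> {} \<and> cell_of_dim \<sigma> (cdim \<sigma>)"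
  using assms unfolding cell_complex_def by (elim conjE) assumption

lemma cc_disj0: assumes "cell_complex X C cdim" shows "\<forall>\<sigma>\<in>C. \<forall>\<tau>\<in>C. \<sigma> \<noteq> \<tau> \<longrightarrow> \<sigma> \<inter> \<tau> = {}"
  using assms unfolding cell_complex_def by (elim conjE) assumption

lemma cc_cover: assumes "cell_complex X C cdim" shows "\<Union>C = X"
  using assms unfolding cell_complex_def by (elim conjE) assumption

lemma cc_bdry0: assumes "cell_complex X C cdim" shows "\<forall>\<sigma>\<in>C. closure \<sigma> - \<sigma> \<subseteq> \<Union>{\<tau>\<in>C. cdim \<tau> < cdim \<sigma>}"
  using assms unfolding cell_complex_def by (elim conjE) assumption

lemma cc_finite0: assumes "cell_complex X C cdim" shows "\<forall>\<sigma>\<in>C. finite {\<tau>\<in>C. \<tau> \<inter> closure \<sigma> \<noteq> {}}"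
  using assms unfolding cell_complex_def by (elim conjE) assumption

lemma cc_weak0: assumes "cell_complex X C cdim" shows "\<forall>A. A \<subseteq> X \<longrightarrow>
        (closedin (top_of_set X) A \<longleftrightarrow> (\<forall>\<sigma>\<in>C. closedin (top_of_set (closure \<sigma>)) (A \<inter> closure \<sigma>)))"
  using assms unfolding cell_complex_def by (elim conjE) assumption

lemma cc_cell: "cell_complex X C cdim \<Longrightarrow> \<sigma> \<in> C \<Longrightarrow> \<sigma> \<noteq> {} \<and> cell_of_dim \<sigma> (cdim \<sigma>)"
  using cc_cell0 by blast
lemma cc_disj: "cell_complex X C cdim \<Longrightarrow> \<sigma> \<in> C \<Longrightarrow> \<tau> \<in> C \<Longrightarrow> \<sigma> \<noteq> \<tau> \<Longrightarrow> \<sigma> \<inter> \<tau> = {}"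
  using cc_disj0 by blast
lemma cc_bdry: "cell_complex X C cdim \<Longrightarrow> \<sigma> \<in> C \<Longrightarrow> closure \<sigma> - \<sigma> \<subseteq> \<Union>{\<tau>\<in>C. cdim \<tau> < cdim \<sigma>}"
  using cc_bdry0 by blast
lemma cc_finite: "cell_complex X C cdim \<Longrightarrow> \<sigma> \<in> C \<Longrightarrow> finite {\<tau>\<in>C. \<tau> \<inter> closure \<sigma> \<noteq> {}}"
  using cc_finite0 by blast
lemma cc_weak: "cell_complex X C cdim \<Longrightarrow> A \<subseteq> X \<Longrightarrow>
   (\<forall>\<sigma>\<in>C. closedin (top_of_set (closure \<sigma>)) (A \<inter> closure \<sigma>)) \<Longrightarrow> closedin (top_of_set X) A"
  using cc_weak0 by blast

lemma lower_dim:
  assumes cc: "cell_complex X C cdim" and ab: "\<alpha> \<in> C" "\<beta> \<in> C" "\<alpha> \<noteq> \<beta>" "\<alpha> \<inter> closure \<beta> \<noteq> {}"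
  shows "cdim \<alpha> < cdim \<beta>"
proof -
  obtain p where p: "p \<in> \<alpha>" "p \<in> closure \<beta>" using ab(4) by blast
  have disj: "\<alpha> \<inter> \<beta> = {}" using cc_disj[OF cc ab(1,2,3)] .
  then have "p \<in> closure \<beta> - \<beta>" using p by blast
  then have "p \<in> \<Union>{\<tau>\<in>C. cdim \<tau> < cdim \<beta>}" using cc_bdry[OF cc ab(2)] by blast
  then obtain \<tau> where \<tau>: "\<tau> \<in> C" "cdim \<tau> < cdim \<beta>" "p \<in> \<tau>" by blast
  have "\<tau> = \<alpha>" using cc_disj[OF cc \<tau>(1) ab(1)] \<tau>(3) p(1) by blast
  then show ?thesis using \<tau> by simp
qed

lemma local_dich:
  fixes \<sigma> \<rho> :: "(real^'n) set"
  assumes cc: "cell_complex X C cdim" and sr: "\<sigma> \<in> C" "\<rho> \<in> C" "\<sigma> \<noteq> \<rho>" and q: "q \<in> \<sigma>" "q \<in> closure \<rho>"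
  shows "(\<exists>\<tau>\<in>C. \<tau> \<noteq> \<sigma> \<and> \<tau> \<noteq> \<rho> \<and> \<tau> \<inter> closure \<rho> \<noteq> {} \<and> q \<in> closure \<tau>) \<or>
         (cdim \<rho> = cdim \<sigma> + 1 \<and> (\<exists>Ob. open Ob \<and> q \<in> Ob \<and> Ob \<inter> \<sigma> \<subseteq> closure \<rho>))"
proof (cases "q \<in> closure (closure \<rho> - \<rho> - \<sigma>)")
  case True
  define F where "F = {\<tau>\<in>C. \<tau> \<inter> closure \<rho> \<noteq> {}} - {\<sigma>, \<rho>}"
  have finF: "finite F" using cc_finite[OF cc sr(2)] unfolding F_def by auto
  have sub: "closure \<rho> - \<rho> - \<sigma> \<subseteq> \<Union>F"
  proof
    fix x assume x: "x \<in> closure \<rho> - \<rho> - \<sigma>"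
    then have "x \<in> \<Union>{\<tau>\<in>C. cdim \<tau> < cdim \<rho>}" using cc_bdry[OF cc sr(2)] by blast
    then obtain \<tau> where \<tau>: "\<tau> \<in> C" "cdim \<tau> < cdim \<rho>" "x \<in> \<tau>" by blast
    then have "\<tau> \<in> F" using x unfolding F_def by auto
    then show "x \<in> \<Union>F" using \<tau> by blast
  qed
  have "closure (closure \<rho> - \<rho> - \<sigma>) \<subseteq> \<Union>(closure ` F)"
  proof (rule closure_minimal)
    show "closure \<rho> - \<rho> - \<sigma> \<subseteq> \<Union>(closure ` F)" using sub closure_subset by blast
    show "closed (\<Union>(closure ` F))" using finF by (intro closed_Union) auto
  qed
  then obtain \<tau> where "\<tau> \<in> F" "q \<in> closure \<tau>" using True by blast
  then show ?thesis unfolding F_def by blast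
next
  case False
  define U where "U = - closure (closure \<rho> - \<rho> - \<sigma>)"
  have U: "open U" "q \<in> U" using False by (auto simp: U_def)
  have UB: "U \<inter> (closure \<rho> - \<rho>) \<subseteq> \<sigma>" using closure_subset[of "closure \<rho> - \<rho> - \<sigma>"] unfolding U_def by blast
  have qB: "q \<in> closure \<rho> - \<rho>" using q cc_disj[OF cc sr] by blast
  have kd: "cdim \<sigma> < cdim \<rho>" using q by (intro lower_dim[OF cc sr]) blast
  obtain V :: "(real^'n) set" and h h' where V: "subspace V" "dim V = cdim \<rho>"
    "homeomorphism (cball 0 1 \<inter> V) (closure \<rho>) h h'" "h ` (ball 0 1 \<inter> V) = \<rho>"
    using conjunct2[OF cc_cell[OF cc sr(2)]] by (rule cell_of_dimE)
  obtain V' :: "(real^'n) set" and g g' where V': "subspace V'" "dim V' = cdim \<sigma>"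
    "homeomorphism (cball 0 1 \<inter> V') (closure \<sigma>) g g'" "g ` (ball 0 1 \<inter> V') = \<sigma>"
    using conjunct2[OF cc_cell[OF cc sr(1)]] by (rule cell_of_dimE)
  have "cdim \<sigma> + 1 = cdim \<rho> \<and> (\<exists>Ob. open Ob \<and> q \<in> Ob \<and> Ob \<inter> \<sigma> \<subseteq> closure \<rho>)"
    by (rule top_local[OF V V' kd U qB UB])
  then show ?thesis by simp
qed

lemma containment:
  fixes \<sigma> \<rho> :: "(real^'n) set"
  assumes cc: "cell_complex X C cdim"
  shows "\<sigma> \<in> C \<Longrightarrow> \<rho> \<in> C \<Longrightarrow> \<sigma> \<noteq> \<rho> \<Longrightarrow> \<sigma> \<inter> closure \<rho> \<noteq> {} \<Longrightarrow> \<sigma> \<subseteq> closure \<rho>"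
proof (induction "cdim \<rho> - cdim \<sigma>" arbitrary: \<sigma> \<rho> rule: less_induct)
  case less
  show ?case
  proof (cases "\<exists>q\<in>\<sigma> \<inter> closure \<rho>. \<exists>\<tau>\<in>C. \<tau> \<noteq> \<sigma> \<and> \<tau> \<noteq> \<rho> \<and> \<tau> \<inter> closure \<rho> \<noteq> {} \<and> q \<in> closure \<tau>")
    case True
    then obtain q \<tau> where q: "q \<in> \<sigma>" "q \<in> closure \<rho>" and \<tau>: "\<tau> \<in> C" "\<tau> \<noteq> \<sigma>" "\<tau> \<noteq> \<rho>"
      "\<tau> \<inter> closure \<rho> \<noteq> {}" "q \<in> closure \<tau>" by blast
    have st: "\<sigma> \<inter> closure \<tau> \<noteq> {}" using q \<tau> by blast
    have d1: "cdim \<sigma> < cdim \<tau>" using lower_dim[OF cc less(2) \<tau>(1) \<tau>(2)[symmetric] st] .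
    have d2: "cdim \<tau> < cdim \<rho>" using lower_dim[OF cc \<tau>(1) less(3) \<tau>(3,4)] .
    have "\<tau> \<subseteq> closure \<rho>" using less.hyps[of \<rho> \<tau>] d1 d2 \<tau> less(3) by simp
    moreover have "\<sigma> \<subseteq> closure \<tau>" using less.hyps[of \<tau> \<sigma>] d1 d2 \<tau> less(2) st by simp
    moreover have "closure \<tau> \<subseteq> closure \<rho>" using \<open>\<tau> \<subseteq> closure \<rho>\<close> by (intro closure_minimal) auto
    ultimately show ?thesis by blast
  next
    case False
    have loc: "\<exists>Ob. open Ob \<and> q \<in> Ob \<and> Ob \<inter> \<sigma> \<subseteq> closure \<rho>" if "q \<in> \<sigma> \<inter> closure \<rho>" for q
      using local_dich[OF cc less(2,3,4)] that False by blast
    define W where "W = \<Union>{Ob. open Ob \<and> Ob \<inter> \<sigma> \<subseteq> closure \<rho>}"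
    have "\<sigma> \<inter> closure \<rho> = \<sigma> \<inter> W"
    proof
      show "\<sigma> \<inter> closure \<rho> \<subseteq> \<sigma> \<inter> W" unfolding W_def using loc by blast
      show "\<sigma> \<inter> W \<subseteq> \<sigma> \<inter> closure \<rho>" unfolding W_def by blast
    qed
    moreover have "open W" unfolding W_def by auto
    ultimately have op: "openin (top_of_set \<sigma>) (\<sigma> \<inter> closure \<rho>)" by (auto simp: openin_open)
    have cl: "closedin (top_of_set \<sigma>) (\<sigma> \<inter> closure \<rho>)" by (rule closedin_closed_Int) simp
    have "connected \<sigma>" using conjunct2[OF cc_cell[OF cc less(2)]] by (rule cell_connected)
    then have "\<sigma> \<inter> closure \<rho> = {} \<or> \<sigma> \<inter> closure \<rho> = \<sigma>" using op cl unfolding connected_clopen by blast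
    then show ?thesis using less(5) by blast
  qed
qed

lemma zle_antisym: "zle u v \<Longrightarrow> zle v u \<Longrightarrow> u = v"
  unfolding zle_def by (simp add: vec_eq_iff order_antisym)

lemma chain:
  fixes \<sigma> \<rho> :: "(real^'n) set" and cv :: "(real^'n) set \<Rightarrow> int^'m"
  assumes cc: "cell_complex X C cdim"
    and mono: "\<And>\<alpha> \<beta>. \<alpha> \<in> C \<Longrightarrow> \<beta> \<in> C \<Longrightarrow> \<alpha> \<inter> closure \<beta> \<noteq> {} \<Longrightarrow> zle (cv \<alpha>) (cv \<beta>)"
  shows "\<sigma> \<in> C \<Longrightarrow> \<rho> \<in> C \<Longrightarrow> \<sigma> \<noteq> \<rho> \<Longrightarrow> \<sigma> \<inter> closure \<rho> \<noteq> {} \<Longrightarrow> cv \<sigma> = cv \<rho> \<Longrightarrow>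
     \<exists>\<alpha>\<in>C. \<exists>\<beta>\<in>C. facet cdim \<alpha> \<beta> \<and> cv \<alpha> = cv \<beta>"
proof (induction "cdim \<rho> - cdim \<sigma>" arbitrary: \<sigma> \<rho> rule: less_induct)
  case less
  obtain q where q: "q \<in> \<sigma>" "q \<in> closure \<rho>" using less(5) by blast
  from local_dich[OF cc less(2,3,4) q] show ?case
  proof
    assume "\<exists>\<tau>\<in>C. \<tau> \<noteq> \<sigma> \<and> \<tau> \<noteq> \<rho> \<and> \<tau> \<inter> closure \<rho> \<noteq> {} \<and> q \<in> closure \<tau>"
    then obtain \<tau> where \<tau>: "\<tau> \<in> C" "\<tau> \<noteq> \<sigma>" "\<tau> \<noteq> \<rho>" "\<tau> \<inter> closure \<rho> \<noteq> {}" "q \<in> closure \<tau>" by blast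
    have st: "\<sigma> \<inter> closure \<tau> \<noteq> {}" using q \<tau> by blast
    have d1: "cdim \<sigma> < cdim \<tau>" using lower_dim[OF cc less(2) \<tau>(1) \<tau>(2)[symmetric] st] .
    have d2: "cdim \<tau> < cdim \<rho>" using lower_dim[OF cc \<tau>(1) less(3) \<tau>(3,4)] .
    have "zle (cv \<sigma>) (cv \<tau>)" using mono[OF less(2) \<tau>(1) st] .
    moreover have "zle (cv \<tau>) (cv \<rho>)" using mono[OF \<tau>(1) less(3) \<tau>(4)] .
    moreover note less(6)
    ultimately have "cv \<sigma> = cv \<tau>" using zle_antisym[of "cv \<sigma>" "cv \<tau>"] by simp
    then show ?thesis using less.hyps[of \<tau> \<sigma>] d1 d2 \<tau> less(2) st by simp
  next
    assume "cdim \<rho> = cdim \<sigma> + 1 \<and> (\<exists>Ob. open Ob \<and> q \<in> Ob \<and> Ob \<inter> \<sigma> \<subseteq> closure \<rho>)"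
    then have "cdim \<rho> = cdim \<sigma> + 1" by blast
    moreover have "\<sigma> \<subseteq> closure \<rho>" using containment[OF cc less(2,3,4,5)] .
    ultimately have "facet cdim \<rho> \<sigma>" by (simp add: facet_def)
    then show ?thesis using less(2,3) less(6)[symmetric] by blast
  qed
qed

lemma strat_open: assumes "stratification L C \<psi>"
  shows "\<forall>U. up_closed U \<longrightarrow> openin (top_of_set (LR L)) {p \<in> LR L. \<psi> p \<in> U}"
  using assms unfolding stratification_def by (elim conjE) assumption
lemma strat_const: assumes "stratification L C \<psi>"
  shows "\<forall>\<sigma>\<in>C. \<forall>p\<in>\<sigma>. \<forall>q\<in>\<sigma>. \<psi> p = \<psi> q"
  using assms unfolding stratification_def by (elim conjE) assumption

lemma cval_eq:
  assumes const: "\<forall>\<sigma>\<in>C. \<forall>p\<in>\<sigma>. \<forall>q\<in>\<sigma>. \<psi> p = \<psi> q" and "\<sigma> \<in> C" "p \<in> \<sigma>"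
  shows "cval \<psi> \<sigma> = \<psi> p"
proof -
  have "(SOME x. x \<in> \<sigma>) \<in> \<sigma>" using assms(3) by (rule someI)
  then show ?thesis unfolding cval_def using const assms(2,3) by blast
qed

lemma zle_refl: "zle u u" by (simp add: zle_def)
lemma zle_trans: "zle u v \<Longrightarrow> zle v w \<Longrightarrow> zle u w" unfolding zle_def by (meson order_trans)

lemma psi_mono:
  fixes \<psi> :: "real^'n \<Rightarrow> int^'n"
  assumes cc: "cell_complex (LR L) C cdim" and st: "stratification L C \<psi>"
    and ab: "\<alpha> \<in> C" "\<beta> \<in> C" "\<alpha> \<inter> closure \<beta> \<noteq> {}"
  shows "zle (cval \<psi> \<alpha>) (cval \<psi> \<beta>)"
proof -
  have const: "\<forall>\<sigma>\<in>C. \<forall>p\<in>\<sigma>. \<forall>q\<in>\<sigma>. \<psi> p = \<psi> q" using strat_const[OF st] .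
  define U where "U = {v. zle (cval \<psi> \<alpha>) v}"
  have "up_closed U" unfolding up_closed_def U_def using zle_trans by blast
  then have "openin (top_of_set (LR L)) {p \<in> LR L. \<psi> p \<in> U}" using strat_open[OF st] by blast
  then obtain T where T: "open T" "{p \<in> LR L. \<psi> p \<in> U} = LR L \<inter> T" by (auto simp: openin_open)
  obtain q where q: "q \<in> \<alpha>" "q \<in> closure \<beta>" using ab(3) by blast
  have qX: "q \<in> LR L" using q(1) ab(1) cc_cover[OF cc] by blast
  have "\<psi> q \<in> U" using cval_eq[OF const ab(1) q(1)] by (simp add: U_def zle_refl)
  then have "q \<in> T" using T(2) qX by blast
  then have "T \<inter> closure \<beta> \<noteq> {}" using q(2) by blast
  then have "T \<inter> \<beta> \<noteq> {}" using open_Int_closure_eq_empty[OF T(1)] by blast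
  then obtain x where x: "x \<in> T" "x \<in> \<beta>" by blast
  have "x \<in> LR L" using x(2) ab(2) cc_cover[OF cc] by blast
  then have "\<psi> x \<in> U" using T(2) x(1) by blast
  then show ?thesis using cval_eq[OF const ab(2) x(2)] by (simp add: U_def)
qed

lemma compo:
  fixes \<psi> :: "real^'n \<Rightarrow> int^'n" and X :: "(real^'n) set"
  assumes cc: "cell_complex X C cdim"
    and const: "\<forall>\<sigma>\<in>C. \<forall>p\<in>\<sigma>. \<forall>q\<in>\<sigma>. \<psi> p = \<psi> q"
    and nopair: "\<And>\<alpha> \<beta> p q. \<alpha> \<in> C \<Longrightarrow> \<beta> \<in> C \<Longrightarrow> \<alpha> \<noteq> \<beta> \<Longrightarrow> p \<in> \<alpha> \<Longrightarrow> q \<in> \<beta> \<Longrightarrow> \<psi> p = \<psi> q \<Longrightarrow>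
        \<alpha> \<inter> closure \<beta> = {}"
    and K: "K \<in> components {p \<in> X. \<psi> p = u}"
  shows "\<exists>\<sigma>\<in>C. K = \<sigma>"
proof -
  define P where "P = {p \<in> X. \<psi> p = u}"
  have Kne: "K \<noteq> {}" and KP: "K \<subseteq> P" and Kc: "connected K"
    using K in_components_nonempty in_components_subset in_components_connected unfolding P_def by blast+
  obtain p where pK: "p \<in> K" using Kne by blast
  have cov: "\<Union>C = X" using cc_cover[OF cc] .
  obtain \<sigma> where \<sigma>: "\<sigma> \<in> C" "p \<in> \<sigma>" using pK KP cov unfolding P_def by blast
  have pu: "\<psi> p = u" using pK KP unfolding P_def by blast
  have sP: "\<sigma> \<subseteq> P"
  proof
    fix x assume "x \<in> \<sigma>"
    then show "x \<in> P" using \<sigma> cov const pu unfolding P_def by blast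
  qed
  have sc: "connected \<sigma>" using conjunct2[OF cc_cell[OF cc \<sigma>(1)]] by (rule cell_connected)
  have sK: "\<sigma> \<subseteq> K" using components_maximal[OF K[folded P_def] sc sP] pK \<sigma>(2) by blast
  have cl: "closedin (top_of_set P) \<sigma>"
  proof -
    have "P \<inter> closure \<sigma> \<subseteq> \<sigma>"
    proof
      fix x assume x: "x \<in> P \<inter> closure \<sigma>"
      then obtain \<tau> where \<tau>: "\<tau> \<in> C" "x \<in> \<tau>" using cov unfolding P_def by blast
      show "x \<in> \<sigma>"
      proof (rule ccontr)
        assume "x \<notin> \<sigma>"
        then have "\<tau> \<noteq> \<sigma>" using \<tau> by blast
        moreover have "\<psi> x = \<psi> p" using x pu unfolding P_def by simp
        ultimately have "\<tau> \<inter> closure \<sigma> = {}" using nopair[OF \<tau>(1) \<sigma>(1) _ \<tau>(2) \<sigma>(2)] by blast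
        then show False using x \<tau> by blast
      qed
    qed
    then have "\<sigma> = P \<inter> closure \<sigma>" using sP closure_subset by blast
    then show ?thesis by (metis closedin_closed_Int closed_closure)
  qed
  have op: "openin (top_of_set P) \<sigma>"
  proof -
    have "P \<inter> closure (P - \<sigma>) \<subseteq> P - \<sigma>"
    proof
      fix p0 assume p0: "p0 \<in> P \<inter> closure (P - \<sigma>)"
      show "p0 \<in> P - \<sigma>"
      proof (rule ccontr)
        assume "p0 \<notin> P - \<sigma>"
        then have p0s: "p0 \<in> \<sigma>" using p0 by blast
        obtain x where x: "\<And>n. x n \<in> P - \<sigma>" and lim: "x \<longlonglongrightarrow> p0"
          using p0 closure_sequential by blast
        have fin: "finite {n. x n \<in> \<tau>}" if \<tau>: "\<tau> \<in> C" for \<tau>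
        proof (cases "\<exists>n. x n \<in> \<tau>")
          case False
          then show ?thesis by simp
        next
          case True
          then obtain m where m: "x m \<in> \<tau>" by blast
          have "\<tau> \<noteq> \<sigma>" using m x[of m] by blast
          moreover have "\<psi> p0 = \<psi> (x m)" using p0 x[of m] unfolding P_def by simp
          ultimately have "\<sigma> \<inter> closure \<tau> = {}" using nopair[OF \<sigma>(1) \<tau>] p0s m by blast
          then have "p0 \<in> - closure \<tau>" using p0s by blast
          then have "eventually (\<lambda>n. x n \<in> - closure \<tau>) sequentially"
            using lim by (intro topological_tendstoD) auto
          then obtain N where N: "\<And>n. n \<ge> N \<Longrightarrow> x n \<in> - closure \<tau>"
            unfolding eventually_sequentially by blast
          have "{n. x n \<in> \<tau>} \<subseteq> {..<N}"
          proof
            fix n assume "n \<in> {n. x n \<in> \<tau>}"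
            then have "x n \<in> closure \<tau>" using closure_subset by blast
            then show "n \<in> {..<N}" using N[of n] by (cases "n \<ge> N") auto
          qed
          then show ?thesis by (rule finite_subset) simp
        qed
        define A where "A = range x"
        have AX: "A \<subseteq> X" using x unfolding A_def P_def by blast
        have "closedin (top_of_set X) A"
        proof (rule cc_weak[OF cc AX], rule ballI)
          fix \<beta> assume \<beta>: "\<beta> \<in> C"
          define F where "F = {\<tau>\<in>C. \<tau> \<inter> closure \<beta> \<noteq> {}}"
          have finF: "finite F" using cc_finite[OF cc \<beta>] unfolding F_def .
          have "A \<inter> closure \<beta> \<subseteq> x ` (\<Union>\<tau>\<in>F. {n. x n \<in> \<tau>})"
          proof
            fix y assume y: "y \<in> A \<inter> closure \<beta>"
            then obtain n where n: "y = x n" unfolding A_def by blast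
            have "y \<in> X" using y AX by blast
            then obtain \<tau> where "\<tau> \<in> C" "y \<in> \<tau>" using cov by blast
            then have "\<tau> \<in> F" "x n \<in> \<tau>" using y n unfolding F_def by blast+
            then show "y \<in> x ` (\<Union>\<tau>\<in>F. {n. x n \<in> \<tau>})" using n by blast
          qed
          moreover have "finite (x ` (\<Union>\<tau>\<in>F. {n. x n \<in> \<tau>}))"
            using finF fin unfolding F_def by auto
          ultimately have "finite (A \<inter> closure \<beta>)" by (rule finite_subset)
          then have "closed (A \<inter> closure \<beta>)" by (rule finite_imp_closed)
          then have "closedin (top_of_set (closure \<beta>)) (closure \<beta> \<inter> (A \<inter> closure \<beta>))"
            by (rule closedin_closed_Int)
          then show "closedin (top_of_set (closure \<beta>)) (A \<inter> closure \<beta>)"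
            by (simp add: Int_absorb1 inf_commute)
        qed
        then obtain T where T: "closed T" "A = X \<inter> T" by (auto simp: closedin_closed)
        have "\<And>n. x n \<in> T" using T(2) unfolding A_def by blast
        then have "p0 \<in> T" using closed_sequentially[OF T(1) _ lim] by blast
        moreover have "p0 \<in> X" using p0 unfolding P_def by blast
        ultimately have "p0 \<in> A" using T(2) by blast
        then obtain n where "p0 = x n" unfolding A_def by blast
        then show False using x[of n] p0s by blast
      qed
    qed
    then have "closedin (top_of_set P) (P - \<sigma>)"
      using closedin_closed_Int[of "closure (P - \<sigma>)" P] closure_subset[of "P - \<sigma>"]
      by (metis Diff_subset closed_closure inf.absorb_iff2 subset_antisym Int_lower1 le_inf_iff)
    then show ?thesis using sP by (simp add: openin_closedin_eq)
  qed
  have "openin (top_of_set K) \<sigma>" using openin_subset_trans[OF op sK KP] .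
  moreover have "closedin (top_of_set K) \<sigma>" using closedin_subset_trans[OF cl sK KP] .
  ultimately have "\<sigma> = {} \<or> \<sigma> = K" using Kc unfolding connected_clopen by blast
  then show ?thesis using \<sigma> by blast
qed

lemma inc_vals: assumes "incidence_function L C cdim \<epsilon>"
  shows "\<forall>\<sigma>\<in>C. \<forall>\<tau>\<in>C. (facet cdim \<sigma> \<tau> \<longrightarrow> \<epsilon> \<sigma> \<tau> \<in> {1, -1}) \<and> (\<not> facet cdim \<sigma> \<tau> \<longrightarrow> \<epsilon> \<sigma> \<tau> = 0)"
  using assms unfolding incidence_function_def by (elim conjE) assumption

lemma single_scalar_iff:
  fixes c :: "'k::field"
  shows "(\<exists>c'. c' \<noteq> 0 \<and> Poly_Mapping.single a c = Poly_Mapping.single 0 c') \<longleftrightarrow> (c \<noteq> 0 \<and> a = 0)"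
proof
  assume "\<exists>c'. c' \<noteq> 0 \<and> Poly_Mapping.single a c = Poly_Mapping.single 0 c'"
  then obtain c' where c': "c' \<noteq> 0" "Poly_Mapping.single a c = Poly_Mapping.single 0 c'" by blast
  have "Poly_Mapping.lookup (Poly_Mapping.single a c) 0 = c'" by (subst c'(2)) (simp add: lookup_single)
  then have "(c when a = 0) = c'" by (simp only: lookup_single)
  then show "c \<noteq> 0 \<and> a = 0" using c'(1) by (cases "a = 0") auto
next
  assume "c \<noteq> 0 \<and> a = 0"
  then show "\<exists>c'. c' \<noteq> 0 \<and> Poly_Mapping.single a c = Poly_Mapping.single 0 c'" by blast
qed

lemma monexp_zero_iff:
  assumes "zle v u"
  shows "monexp (u - v) = 0 \<longleftrightarrow> u = v"
proof
  assume h: "monexp (u - v) = 0"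
  show "u = v"
  unfolding vec_eq_iff
  proof
    fix i
    have "nat ((u - v) $ i) = 0" using h unfolding monexp_def by (metis vec_lambda_beta zero_index)
    moreover have "v $ i \<le> u $ i" using assms unfolding zle_def by blast
    ultimately show "u $ i = v $ i" by simp
  qed
next
  assume "u = v"
  then show "monexp (u - v) = 0" unfolding monexp_def by (simp add: vec_eq_iff)
qed

lemma entry_iff:
  fixes \<psi> :: "real^'n \<Rightarrow> int^'n"
  assumes cc: "cell_complex (LR L) C cdim" and st: "stratification L C \<psi>"
    and inc: "incidence_function L C cdim \<epsilon>" and st2: "\<sigma> \<in> C" "\<tau> \<in> C"
  shows "nonzero_scalar (Fpsi_entry \<psi> \<epsilon> \<sigma> \<tau> :: (nat^'n) \<Rightarrow>\<^sub>0 'k::field) \<longleftrightarrow>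
     facet cdim \<sigma> \<tau> \<and> cval \<psi> \<sigma> = cval \<psi> \<tau>"
proof (cases "facet cdim \<sigma> \<tau>")
  case True
  have e: "\<epsilon> \<sigma> \<tau> \<in> {1, -1}" using inc_vals[OF inc] st2 True by blast
  then have e0: "(of_int (\<epsilon> \<sigma> \<tau>) :: 'k) \<noteq> 0" by auto
  have "\<tau> \<subseteq> closure \<sigma>" using True unfolding facet_def by blast
  moreover have "\<tau> \<noteq> {}" using cc_cell[OF cc st2(2)] by blast
  ultimately have "\<tau> \<inter> closure \<sigma> \<noteq> {}" by blast
  then have z: "zle (cval \<psi> \<tau>) (cval \<psi> \<sigma>)" by (rule psi_mono[OF cc st st2(2,1)])
  show ?thesis unfolding nonzero_scalar_def Fpsi_entry_def single_scalar_iff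
    using e0 monexp_zero_iff[OF z] True by auto
next
  case False
  have "\<epsilon> \<sigma> \<tau> = 0" using inc_vals[OF inc] st2 False by blast
  then show ?thesis unfolding nonzero_scalar_def Fpsi_entry_def single_scalar_iff
    using False by simp
qed

theorem lemma4p7:
  fixes L :: "(int^'n) set"
    and C :: "(real^'n) set set"
    and cdim :: "(real^'n) set \<Rightarrow> nat"
    and \<psi> :: "real^'n \<Rightarrow> int^'n"
    and \<epsilon> :: "(real^'n) set \<Rightarrow> (real^'n) set \<Rightarrow> int"
  assumes "is_subgroup_Zn L"
    and "cell_complex (LR L) C cdim"
    and "equivariant_cc L C cdim"
    and "stratification L C \<psi>"
    and "incidence_function L C cdim \<epsilon>"
  shows "Fpsi_minimal TYPE('k::field) C cdim \<psi> \<epsilon> \<longleftrightarrow>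
         (\<forall>u. \<forall>K \<in> components {p \<in> LR L. \<psi> p = u}. \<exists>\<sigma>\<in>C. K = \<sigma>)"
proof -
  note cc = assms(2) and st = assms(4) and inc = assms(5)
  have const: "\<forall>\<sigma>\<in>C. \<forall>p\<in>\<sigma>. \<forall>q\<in>\<sigma>. \<psi> p = \<psi> q" using strat_const[OF st] .
  have min_iff: "Fpsi_minimal TYPE('k::field) C cdim \<psi> \<epsilon> \<longleftrightarrow>
      \<not> (\<exists>\<sigma>\<in>C. \<exists>\<tau>\<in>C. facet cdim \<sigma> \<tau> \<and> cval \<psi> \<sigma> = cval \<psi> \<tau>)"
    unfolding Fpsi_minimal_def using entry_iff[OF cc st inc, where 'k='k] unfolding facet_def by blast
  show ?thesis
  proof
    assume "Fpsi_minimal TYPE('k::field) C cdim \<psi> \<epsilon>"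
    then have nf: "\<not> (\<exists>\<sigma>\<in>C. \<exists>\<tau>\<in>C. facet cdim \<sigma> \<tau> \<and> cval \<psi> \<sigma> = cval \<psi> \<tau>)" using min_iff by blast
    have mono: "\<And>\<alpha> \<beta>. \<alpha> \<in> C \<Longrightarrow> \<beta> \<in> C \<Longrightarrow> \<alpha> \<inter> closure \<beta> \<noteq> {} \<Longrightarrow> zle (cval \<psi> \<alpha>) (cval \<psi> \<beta>)"
      using psi_mono[OF cc st] by blast
    have nopair: "\<alpha> \<inter> closure \<beta> = {}"
      if ab: "\<alpha> \<in> C" "\<beta> \<in> C" "\<alpha> \<noteq> \<beta>" "p \<in> \<alpha>" "q \<in> \<beta>" "\<psi> p = \<psi> q" for \<alpha> \<beta> p q
    proof (rule ccontr)
      assume ne: "\<alpha> \<inter> closure \<beta> \<noteq> {}"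
      have cv: "cval \<psi> \<alpha> = cval \<psi> \<beta>" using cval_eq[OF const ab(1,4)] cval_eq[OF const ab(2,5)] ab(6) by simp
      have "\<exists>\<alpha>'\<in>C. \<exists>\<beta>'\<in>C. facet cdim \<alpha>' \<beta>' \<and> cval \<psi> \<alpha>' = cval \<psi> \<beta>'"
        by (rule chain[OF cc mono ab(1) ab(2) ab(3) ne cv])
      then show False using nf by blast
    qed
    show "\<forall>u. \<forall>K \<in> components {p \<in> LR L. \<psi> p = u}. \<exists>\<sigma>\<in>C. K = \<sigma>"
    proof (intro allI ballI)
      fix u K assume K: "K \<in> components {p \<in> LR L. \<psi> p = u}"
      show "\<exists>\<sigma>\<in>C. K = \<sigma>"
        apply (rule compo[OF cc const _ K])
        apply (rule nopair; assumption)
        done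
    qed
  next
    assume comp: "\<forall>u. \<forall>K \<in> components {p \<in> LR L. \<psi> p = u}. \<exists>\<sigma>\<in>C. K = \<sigma>"
    have "\<not> (\<exists>\<sigma>\<in>C. \<exists>\<tau>\<in>C. facet cdim \<sigma> \<tau> \<and> cval \<psi> \<sigma> = cval \<psi> \<tau>)"
    proof
      assume "\<exists>\<sigma>\<in>C. \<exists>\<tau>\<in>C. facet cdim \<sigma> \<tau> \<and> cval \<psi> \<sigma> = cval \<psi> \<tau>"
      then obtain \<sigma> \<tau> where s: "\<sigma> \<in> C" "\<tau> \<in> C" "facet cdim \<sigma> \<tau>" "cval \<psi> \<sigma> = cval \<psi> \<tau>" by blast
      define u where "u = cval \<psi> \<sigma>"
      define P where "P = {p \<in> LR L. \<psi> p = u}"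
      have cov: "\<Union>C = LR L" using cc_cover[OF cc] .
      have sub: "\<sigma> \<union> \<tau> \<subseteq> P"
      proof
        fix x assume "x \<in> \<sigma> \<union> \<tau>"
        then show "x \<in> P"
        proof
          assume x: "x \<in> \<sigma>"
          then show "x \<in> P" using cval_eq[OF const s(1) x] s(1) cov unfolding P_def u_def by auto
        next
          assume x: "x \<in> \<tau>"
          then show "x \<in> P" using cval_eq[OF const s(2) x] s(2,4) cov unfolding P_def u_def by auto
        qed
      qed
      have sc: "connected \<sigma>" using conjunct2[OF cc_cell[OF cc s(1)]] by (rule cell_connected)
      have tcl: "\<tau> \<subseteq> closure \<sigma>" using s(3) unfolding facet_def by blast
      have "connected (\<sigma> \<union> \<tau>)"
        by (rule connected_intermediate_closure[OF sc]) (use tcl closure_subset in blast)+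
      then obtain K where K: "K \<in> components P" "\<sigma> \<union> \<tau> \<subseteq> K"
        using exists_component_superset[OF sub] sub cc_cell[OF cc s(1)] by blast
      then obtain \<gamma> where \<gamma>: "\<gamma> \<in> C" "K = \<gamma>" using comp unfolding P_def by blast
      have sne: "\<sigma> \<noteq> {}" and tne: "\<tau> \<noteq> {}" using cc_cell[OF cc s(1)] cc_cell[OF cc s(2)] by blast+
      have "\<sigma> = \<gamma>" using cc_disj[OF cc s(1) \<gamma>(1)] K(2) \<gamma>(2) sne by blast
      moreover have "\<tau> = \<gamma>" using cc_disj[OF cc s(2) \<gamma>(1)] K(2) \<gamma>(2) tne by blast
      ultimately have "\<sigma> = \<tau>" by simp
      then show False using s(3) unfolding facet_def by simp
    qed
    then show "Fpsi_minimal TYPE('k::field) C cdim \<psi> \<epsilon>" using min_iff by blast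
  qed
qed

end
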